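(* Let $a,b\ge1$, $P=[a]\times[b]$, $n=a+b$. For every $f\in(\mathbb R^+)^P$ and every $1\le k\le n-1$, $$Q(\tau^*_k f)=\sigma_k\,Q(f),$$ i.e. applying the birational toggles of the $k$-th file swaps the $k$-th and $(k+1)$-st entries of the quotient sequence and leaves the others unchanged.
   Context: $[a]\times[b]=\{(i,j)\in\mathbb Z^2:1\le i\le a,\ 1\le j\le b\}$ with the product order. Let $\widehat P=P\cup\{\hat0,\hat1\}$ with $\hat0<x<\hat1$ for all $x\in P$; write $y\lessdot x$ for covering relations; $x^+=\{y\in\widehat P:y\gtrdot x\}$, $x^-=\{y\in\widehat P:y\lessdot x\}$. Each $f:P\to\mathbb R^+$ is extended by $\hat f(\hat0)=\hat f(\hat1)=1$. Parallel sum: $s_1\parallel\cdots\parallel s_m=(1/s_1+\cdots+1/s_m)^{-1}$. The birational toggle $\tau_x$ changes only the value at $x$: $(\tau_xf)(x)=\frac{1}{f(x)}\bigl(\sum_{y\in x^-}\hat f(y)\bigr)\bigl(\|_{y\in x^+}\hat f(y)\bigr)$. The $k$-th file ($1\le k\le n-1$) is $\{(i,j)\in P:j-i+a=k\}$; $\tau^*_k$ is the composition of the (commuting) toggles $\tau_x$ over $x$ in file $k$. For $f\in(\mathbb R^+)^P$ let $p_k=\prod_{x\in\text{file }k}f(x)$ for $1\le k\le n-1$, $p_0=p_n=1$, $q_k=p_k/p_{k-1}$ for $1\le k\le n$; the quotient sequence is $Q(f)=(q_1,\dots,q_n)$. For $w=(w_1,\dots,w_n)$, $\sigma_k(w)=(w_1,\dots,w_{k-1},w_{k+1},w_k,w_{k+2},\dots,w_n)$.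 *)

theory Defs
  imports Complex_Main
begin

text \<open>The bounded poset: P with adjoined bottom and top.\<close>
datatype 'a hat = Bot | El 'a | Top

definition grid :: "nat \<Rightarrow> nat \<Rightarrow> (nat \<times> nat) set" where
  "grid a b = {(i, j). 1 \<le> i \<and> i \<le> a \<and> 1 \<le> j \<and> j \<le> b}"

definition prod_le :: "nat \<times> nat \<Rightarrow> nat \<times> nat \<Rightarrow> bool" where
  "prod_le p q \<longleftrightarrow> fst p \<le> fst q \<and> snd p \<le> snd q"

definition in_hat :: "(nat \<times> nat) set \<Rightarrow> (nat \<times> nat) hat \<Rightarrow> bool" where
  "in_hat P x \<longleftrightarrow> x = Bot \<or> x = Top \<or> (\<exists>p\<in>P. x = El p)"

fun hat_less :: "(nat \<times> nat) set \<Rightarrow> (nat \<times> nat) hat \<Rightarrow> (nat \<times> nat) hat \<Rightarrow> bool" where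
  "hat_less P Bot Top = True"
| "hat_less P Bot (El q) = (q \<in> P)"
| "hat_less P (El p) Top = (p \<in> P)"
| "hat_less P (El p) (El q) = (p \<in> P \<and> q \<in> P \<and> prod_le p q \<and> p \<noteq> q)"
| "hat_less P _ _ = False"

text \<open>Covering relation: covers P y x means y is covered by x in hat P.\<close>
definition covers :: "(nat \<times> nat) set \<Rightarrow> (nat \<times> nat) hat \<Rightarrow> (nat \<times> nat) hat \<Rightarrow> bool" where
  "covers P y x \<longleftrightarrow> in_hat P y \<and> in_hat P x \<and> hat_less P y x \<and>
      \<not> (\<exists>z. in_hat P z \<and> hat_less P y z \<and> hat_less P z x)"

definition up_set :: "(nat \<times> nat) set \<Rightarrow> nat \<times> nat \<Rightarrow> (nat \<times> nat) hat set" where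
  "up_set P x = {y. covers P (El x) y}"

definition down_set :: "(nat \<times> nat) set \<Rightarrow> nat \<times> nat \<Rightarrow> (nat \<times> nat) hat set" where
  "down_set P x = {y. covers P y (El x)}"

fun fhat :: "(nat \<times> nat \<Rightarrow> real) \<Rightarrow> (nat \<times> nat) hat \<Rightarrow> real" where
  "fhat f Bot = 1"
| "fhat f Top = 1"
| "fhat f (El p) = f p"

definition par_sum :: "('b \<Rightarrow> real) \<Rightarrow> 'b set \<Rightarrow> real" where
  "par_sum g S = 1 / (\<Sum>y\<in>S. 1 / g y)"

definition toggle :: "(nat \<times> nat) set \<Rightarrow> nat \<times> nat \<Rightarrow> (nat \<times> nat \<Rightarrow> real) \<Rightarrow> (nat \<times> nat \<Rightarrow> real)" where
  "toggle P x f = f(x := (1 / f x) * (\<Sum>y\<in>down_set P x. fhat f y) * par_sum (fhat f) (up_set P x))"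

definition grid_file :: "nat \<Rightarrow> nat \<Rightarrow> nat \<Rightarrow> (nat \<times> nat) set" where
  "grid_file a b k = {(i, j) \<in> grid a b. int j - int i + int a = int k}"

definition toggle_file :: "nat \<Rightarrow> nat \<Rightarrow> nat \<Rightarrow> (nat \<times> nat \<Rightarrow> real) \<Rightarrow> (nat \<times> nat \<Rightarrow> real)" where
  "toggle_file a b k f = fold (\<lambda>x g. toggle (grid a b) x g) [(i, j). i \<leftarrow> [1..<a + 1], j \<leftarrow> [1..<b + 1], (i, j) \<in> grid_file a b k] f"

definition file_prod :: "nat \<Rightarrow> nat \<Rightarrow> (nat \<times> nat \<Rightarrow> real) \<Rightarrow> nat \<Rightarrow> real" where
  "file_prod a b f k = (if k = 0 \<or> k = a + b then 1 else (\<Prod>x\<in>grid_file a b k. f x))"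

definition quot_seq :: "nat \<Rightarrow> nat \<Rightarrow> (nat \<times> nat \<Rightarrow> real) \<Rightarrow> real list" where
  "quot_seq a b f = map (\<lambda>k. file_prod a b f k / file_prod a b f (k - 1)) [1..<a + b + 1]"

definition sigma :: "nat \<Rightarrow> 'c list \<Rightarrow> 'c list" where
  "sigma k w = w[k - 1 := w ! k, k := w ! (k - 1)]"

end

theory Submission imports Defs begin

lemma grid_mem[simp]: "(i,j) \<in> grid a b \<longleftrightarrow> 1 \<le> i \<and> i \<le> a \<and> 1 \<le> j \<and> j \<le> b"
  by (simp add: grid_def)

lemma covers_El_El:
  assumes "p \<in> grid a b" "q \<in> grid a b"
  shows "covers (grid a b) (El p) (El q) \<longleftrightarrow> (q = (fst p + 1, snd p) \<or> q = (fst p, snd p + 1))"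
proof -
  obtain i j i' j' where p: "p=(i,j)" and q: "q=(i',j')" by (cases p, cases q) auto
  have pin: "1 \<le> i" "i \<le> a" "1 \<le> j" "j \<le> b" and qin: "1 \<le> i'" "i' \<le> a" "1 \<le> j'" "j' \<le> b"
    using assms p q by auto
  show ?thesis
  proof
    assume c: "covers (grid a b) (El p) (El q)"
    from c have lt: "i \<le> i'" "j \<le> j'" "p \<noteq> q" and
      nz: "\<not>(\<exists>z. in_hat (grid a b) z \<and> hat_less (grid a b) (El p) z \<and> hat_less (grid a b) z (El q))"
      unfolding covers_def by (auto simp: prod_le_def p q)
    show "q = (fst p + 1, snd p) \<or> q = (fst p, snd p + 1)"
    proof (rule ccontr)
      assume ne: "\<not> (q = (fst p + 1, snd p) \<or> q = (fst p, snd p + 1))"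
      show False
      proof (cases "i < i'")
        case True
        have "in_hat (grid a b) (El (i+1,j)) \<and> hat_less (grid a b) (El p) (El (i+1,j)) \<and> hat_less (grid a b) (El (i+1,j)) (El q)"
          using True ne pin qin lt by (auto simp: in_hat_def prod_le_def p q)
        then show False using nz by blast
      next
        case False
        have "in_hat (grid a b) (El (i,j+1)) \<and> hat_less (grid a b) (El p) (El (i,j+1)) \<and> hat_less (grid a b) (El (i,j+1)) (El q)"
          using False ne pin qin lt by (auto simp: in_hat_def prod_le_def p q)
        then show False using nz by blast
      qed
    qed
  next
    assume h: "q = (fst p + 1, snd p) \<or> q = (fst p, snd p + 1)"
    have nz: "\<not> (in_hat (grid a b) z \<and> hat_less (grid a b) (El p) z \<and> hat_less (grid a b) z (El q))" for z
      using h by (cases z) (auto simp: prod_le_def p q)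
    show "covers (grid a b) (El p) (El q)"
      unfolding covers_def using nz h assms by (auto simp: in_hat_def prod_le_def p q)
  qed
qed

lemma covers_Bot_El:
  assumes "1 \<le> a" "1 \<le> b" "q \<in> grid a b"
  shows "covers (grid a b) Bot (El q) \<longleftrightarrow> q = (1,1)"
proof
  assume c: "covers (grid a b) Bot (El q)"
  show "q = (1,1)"
  proof (rule ccontr)
    assume "q \<noteq> (1,1)"
    then have "in_hat (grid a b) (El (1,1)) \<and> hat_less (grid a b) Bot (El (1,1)) \<and> hat_less (grid a b) (El (1,1)) (El q)"
      using assms by (cases q) (auto simp: in_hat_def prod_le_def)
    then show False using c unfolding covers_def by blast
  qed
next
  assume h: "q = (1,1)"
  have nz: "\<not> (in_hat (grid a b) z \<and> hat_less (grid a b) Bot z \<and> hat_less (grid a b) z (El q))" for z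
    using h by (cases z) (auto simp: prod_le_def)
  show "covers (grid a b) Bot (El q)"
    unfolding covers_def using nz h assms by (auto simp: in_hat_def)
qed

lemma covers_El_Top:
  assumes "1 \<le> a" "1 \<le> b" "p \<in> grid a b"
  shows "covers (grid a b) (El p) Top \<longleftrightarrow> p = (a,b)"
proof
  assume c: "covers (grid a b) (El p) Top"
  show "p = (a,b)"
  proof (rule ccontr)
    assume "p \<noteq> (a,b)"
    then have "in_hat (grid a b) (El (a,b)) \<and> hat_less (grid a b) (El p) (El (a,b)) \<and> hat_less (grid a b) (El (a,b)) Top"
      using assms by (cases p) (auto simp: in_hat_def prod_le_def)
    then show False using c unfolding covers_def by blast
  qed
next
  assume h: "p = (a,b)"
  have nz: "\<not> (in_hat (grid a b) z \<and> hat_less (grid a b) (El p) z \<and> hat_less (grid a b) z Top)" for z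
    using h by (cases z) (auto simp: prod_le_def)
  show "covers (grid a b) (El p) Top"
    unfolding covers_def using nz h assms by (auto simp: in_hat_def)
qed

lemma down_set_eq:
  assumes "1 \<le> a" "1 \<le> b" "(i,j) \<in> grid a b"
  shows "down_set (grid a b) (i,j) = (if (i-1,j) \<in> grid a b then {El (i-1,j)} else {}) \<union>
     (if (i,j-1) \<in> grid a b then {El (i,j-1)} else {}) \<union> (if (i,j) = (1,1) then {Bot} else {})"
proof -
  have "y \<in> down_set (grid a b) (i,j) \<longleftrightarrow> y \<in> (if (i-1,j) \<in> grid a b then {El (i-1,j)} else {}) \<union>
     (if (i,j-1) \<in> grid a b then {El (i,j-1)} else {}) \<union> (if (i,j) = (1,1) then {Bot} else {})" for y
  proof (cases y)
    case Bot then show ?thesis using covers_Bot_El[OF assms] by (auto simp: down_set_def)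
  next
    case Top then show ?thesis by (auto simp: down_set_def covers_def)
  next
    case (El p)
    show ?thesis
    proof (cases "p \<in> grid a b")
      case True
      then show ?thesis using covers_El_El[OF True assms(3)] El assms(3) by (cases p) (auto simp: down_set_def)
    next
      case False
      then show ?thesis using El by (auto simp: down_set_def covers_def in_hat_def)
    qed
  qed
  then show ?thesis by blast
qed

lemma up_set_eq:
  assumes "1 \<le> a" "1 \<le> b" "(i,j) \<in> grid a b"
  shows "up_set (grid a b) (i,j) = (if (i+1,j) \<in> grid a b then {El (i+1,j)} else {}) \<union>
     (if (i,j+1) \<in> grid a b then {El (i,j+1)} else {}) \<union> (if (i,j) = (a,b) then {Top} else {})"
proof -
  have "y \<in> up_set (grid a b) (i,j) \<longleftrightarrow> y \<in> (if (i+1,j) \<in> grid a b then {El (i+1,j)} else {}) \<union>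
     (if (i,j+1) \<in> grid a b then {El (i,j+1)} else {}) \<union> (if (i,j) = (a,b) then {Top} else {})" for y
  proof (cases y)
    case Top then show ?thesis using covers_El_Top[OF assms] by (auto simp: up_set_def)
  next
    case Bot then show ?thesis by (auto simp: up_set_def covers_def)
  next
    case (El p)
    show ?thesis
    proof (cases "p \<in> grid a b")
      case True
      then show ?thesis using covers_El_El[OF assms(3) True] El assms(3) by (cases p) (auto simp: up_set_def)
    next
      case False
      then show ?thesis using El by (auto simp: up_set_def covers_def in_hat_def)
    qed
  qed
  then show ?thesis by blast
qed


lemma down_sum:
  assumes "1 \<le> a" "1 \<le> b" "(i,j) \<in> grid a b"
  shows "(\<Sum>y\<in>down_set (grid a b) (i,j). fhat g y) =
    (if (i-1,j) \<in> grid a b then g (i-1,j) else 0) + (if (i,j-1) \<in> grid a b then g (i,j-1) else 0)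
    + (if (i-1,j) \<notin> grid a b \<and> (i,j-1) \<notin> grid a b then 1 else 0)"
  using assms unfolding down_set_eq[OF assms]
  by (cases "(i-1,j) \<in> grid a b"; cases "(i,j-1) \<in> grid a b") auto

lemma up_par:
  assumes "1 \<le> a" "1 \<le> b" "(i,j) \<in> grid a b"
  shows "par_sum (fhat g) (up_set (grid a b) (i,j)) = 1 /
    ((if (i+1,j) \<in> grid a b then 1 / g (i+1,j) else 0) + (if (i,j+1) \<in> grid a b then 1 / g (i,j+1) else 0)
    + (if (i+1,j) \<notin> grid a b \<and> (i,j+1) \<notin> grid a b then 1 else 0))"
  using assms unfolding up_set_eq[OF assms] par_sum_def
  by (cases "(i+1,j) \<in> grid a b"; cases "(i,j+1) \<in> grid a b") auto

definition TV :: "nat \<Rightarrow> nat \<Rightarrow> (nat \<times> nat \<Rightarrow> real) \<Rightarrow> nat \<times> nat \<Rightarrow> real" where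
  "TV a b g y = (1 / g y) * (\<Sum>w\<in>down_set (grid a b) y. fhat g w) * par_sum (fhat g) (up_set (grid a b) y)"

lemma toggle_TV: "toggle (grid a b) x g = g(x := TV a b g x)"
  by (simp add: toggle_def TV_def)

lemma file_mem: "(i,j) \<in> grid_file a b k \<longleftrightarrow> (i,j) \<in> grid a b \<and> int j - int i + int a = int k"
  by (simp add: grid_file_def)

lemma file_sub: "grid_file a b k \<subseteq> grid a b"
  by (auto simp: grid_file_def)

lemma TV_cong:
  assumes "1 \<le> a" "1 \<le> b" "y \<in> grid_file a b k"
    and agree: "\<And>z. z \<notin> grid_file a b k - {y} \<Longrightarrow> g z = g' z"
  shows "TV a b g y = TV a b g' y"
proof -
  obtain i j where y: "y = (i,j)" by (cases y)
  have yg: "(i,j) \<in> grid a b" and fk: "int j - int i + int a = int k" using assms(3) y by (auto simp: file_mem)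
  have n1: "(i-1,j) \<notin> grid_file a b k" "(i,j-1) \<notin> grid_file a b k"
     "(i+1,j) \<notin> grid_file a b k" "(i,j+1) \<notin> grid_file a b k"
    using fk yg by (auto simp: file_mem)
  have e1: "g (i-1,j) = g' (i-1,j)" "g (i,j-1) = g' (i,j-1)" "g (i+1,j) = g' (i+1,j)" "g (i,j+1) = g' (i,j+1)"
    using agree n1 by auto
  have e2: "g (i,j) = g' (i,j)" using agree[of y] y by auto
  show ?thesis unfolding TV_def y down_sum[OF assms(1,2) yg] up_par[OF assms(1,2) yg] e1 e2 ..
qed

lemma fold_toggle:
  assumes "1 \<le> a" "1 \<le> b"
  shows "distinct xs \<Longrightarrow> set xs \<subseteq> grid_file a b k \<Longrightarrow>
    fold (\<lambda>x g. toggle (grid a b) x g) xs g = (\<lambda>y. if y \<in> set xs then TV a b g y else g y)"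
proof (induction xs arbitrary: g)
  case Nil then show ?case by simp
next
  case (Cons x xs)
  have IH: "fold (\<lambda>x g. toggle (grid a b) x g) xs (toggle (grid a b) x g) =
     (\<lambda>y. if y \<in> set xs then TV a b (toggle (grid a b) x g) y else (toggle (grid a b) x g) y)"
    using Cons by auto
  have tv: "TV a b (toggle (grid a b) x g) y = TV a b g y" if "y \<in> set xs" for y
  proof (rule TV_cong[OF assms])
    show "y \<in> grid_file a b k" using that Cons by auto
    fix z assume "z \<notin> grid_file a b k - {y}"
    then show "toggle (grid a b) x g z = g z" using Cons that by (auto simp: toggle_TV)
  qed
  have eq: "fold (\<lambda>x g. toggle (grid a b) x g) (x # xs) g = fold (\<lambda>x g. toggle (grid a b) x g) xs (toggle (grid a b) x g)"
    by simp
  show ?case unfolding eq IH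
  proof (rule ext)
    fix y show "(if y \<in> set xs then TV a b (toggle (grid a b) x g) y else toggle (grid a b) x g y) = (if y \<in> set (x#xs) then TV a b g y else g y)"
      using tv Cons.prems by (auto simp: toggle_TV)
  qed
qed

lemma list_compr0: "concat (map (\<lambda>j. if (a,j) \<in> S then [(a,j)] else []) ys) = filter (\<lambda>p. p \<in> S) (map (Pair a) ys)"
  by (induction ys) auto

lemma list_compr: "[(i, j). i \<leftarrow> xs, j \<leftarrow> ys, (i,j) \<in> S] = filter (\<lambda>p. p \<in> S) (List.product xs ys)"
  by (induction xs) (auto simp: list_compr0)

lemma toggle_file_eq:
  assumes "1 \<le> a" "1 \<le> b"
  shows "toggle_file a b k f = (\<lambda>y. if y \<in> grid_file a b k then TV a b f y else f y)"
proof -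
  let ?xs = "[(i, j). i \<leftarrow> [1..<a + 1], j \<leftarrow> [1..<b + 1], (i, j) \<in> grid_file a b k]"
  have d: "distinct ?xs" unfolding list_compr by (intro distinct_filter distinct_product distinct_upt)
  have s: "set ?xs = grid_file a b k" unfolding list_compr by (auto simp: grid_file_def)
  have ss: "set ?xs \<subseteq> grid_file a b k" using s by simp
  show ?thesis unfolding toggle_file_def fold_toggle[OF assms d ss] s ..
qed


lemma telescope:
  fixes s u :: "nat \<Rightarrow> real"
  assumes "L \<le> R"
  shows "(\<Prod>t\<in>{L..R}. s t * u (Suc t)) = s L * (\<Prod>t\<in>{Suc L..R}. s t * u t) * u (Suc R)"
  using assms
proof (induction R rule: dec_induct)
  case base then show ?case by simp
next
  case (step R)
  have "(\<Prod>t\<in>{L..Suc R}. s t * u (Suc t)) = (\<Prod>t\<in>{L..R}. s t * u (Suc t)) * (s (Suc R) * u (Suc (Suc R)))"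
    using step by (simp add: prod.cl_ivl_Suc)
  moreover have "(\<Prod>t\<in>{Suc L..Suc R}. s t * u t) = (\<Prod>t\<in>{Suc L..R}. s t * u t) * (s (Suc R) * u (Suc R))"
    using step by (simp add: prod.cl_ivl_Suc)
  ultimately show ?case using step by (simp add: mult_ac)
qed

lemma file_prod_eq: "file_prod a b g m = (\<Prod>x\<in>grid_file a b m. g x)"
proof -
  have "grid_file a b 0 = {}" "grid_file a b (a+b) = {}" by (auto simp: grid_file_def grid_def)
  then show ?thesis by (auto simp: file_prod_def)
qed

context
  fixes a b k :: nat and f :: "nat \<times> nat \<Rightarrow> real"
  assumes a1: "1 \<le> a" and b1: "1 \<le> b" and pos: "\<forall>x\<in>grid a b. f x > 0"
    and k1: "1 \<le> k" and kn: "k \<le> a + b - 1"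
begin

definition "L = max k a + 1"
definition "R = min (a + k) (a + b)"
definition "xx t = (t - k, t - a)"
definition "al t = (t - k - 1, t - a)"
definition "be t = (t - k, t - a - 1)"
definition "S t = (if al t \<in> grid a b then f (al t) else 0) + (if be t \<in> grid a b then f (be t) else 0)
   + (if al t \<notin> grid a b \<and> be t \<notin> grid a b then 1 else 0)"
definition "Ri t = (if al t \<in> grid a b then 1 / f (al t) else 0) + (if be t \<in> grid a b then 1 / f (be t) else 0)
   + (if al t \<notin> grid a b \<and> be t \<notin> grid a b then 1 else 0)"
definition "A t = (if al t \<in> grid a b then f (al t) else 1)"
definition "B t = (if be t \<in> grid a b then f (be t) else 1)"

lemma LR: "L \<le> R" using a1 b1 k1 kn unfolding L_def R_def by arith

lemma file_k_img: "grid_file a b k = xx ` {L..R}"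
proof
  show "grid_file a b k \<subseteq> xx ` {L..R}"
  proof
    fix p assume p: "p \<in> grid_file a b k"
    obtain i j where pij: "p = (i,j)" by (cases p)
    have h: "1 \<le> i" "i \<le> a" "1 \<le> j" "j \<le> b" "int j - int i + int a = int k"
      using p pij by (auto simp: file_mem)
    have "xx (i + k) = p" "i + k \<in> {L..R}" using h pij by (auto simp: xx_def L_def R_def)
    then show "p \<in> xx ` {L..R}" by force
  qed
next
  show "xx ` {L..R} \<subseteq> grid_file a b k"
    using a1 b1 k1 kn by (auto simp: xx_def L_def R_def file_mem)
qed

lemma inj_xx: "inj_on xx {L..R}"
  by (auto simp: inj_on_def xx_def L_def)

lemma DU:
  assumes t: "t \<in> {L..R}"
  shows "(\<Sum>w\<in>down_set (grid a b) (xx t). fhat f w) = S t"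
    and "par_sum (fhat f) (up_set (grid a b) (xx t)) = 1 / Ri (Suc t)"
proof -
  have tk: "t \<ge> k + 1" "t \<ge> a + 1" using t by (auto simp: L_def)
  have g: "(t-k, t-a) \<in> grid a b" using file_k_img t file_sub by (force simp: xx_def)
  have e1: "(t - k - 1, t - a) = al t" "(t-k, t-a-1) = be t" by (auto simp: al_def be_def)
  have e2: "(t - k + 1, t - a) = be (Suc t)" "(t-k, t-a+1) = al (Suc t)" using tk by (auto simp: al_def be_def)
  show "(\<Sum>w\<in>down_set (grid a b) (xx t). fhat f w) = S t"
    unfolding xx_def down_sum[OF a1 b1 g] e1 S_def ..
  show "par_sum (fhat f) (up_set (grid a b) (xx t)) = 1 / Ri (Suc t)"
    unfolding xx_def up_par[OF a1 b1 g] e2 Ri_def by (simp add: add_ac conj_commute)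
qed

lemma first_L: "S L = A L * B L"
proof -
  have "\<not> (al L \<in> grid a b \<and> be L \<in> grid a b)" by (auto simp: al_def be_def L_def)
  then show ?thesis by (auto simp: S_def A_def B_def)
qed

lemma last_R: "1 / Ri (Suc R) = A (Suc R) * B (Suc R)"
proof -
  have "\<not> (al (Suc R) \<in> grid a b \<and> be (Suc R) \<in> grid a b)" by (auto simp: al_def be_def R_def)
  then show ?thesis by (auto simp: Ri_def A_def B_def)
qed

lemma mid: assumes "t \<in> {Suc L..R}" shows "S t * (1 / Ri t) = A t * B t"
proof -
  have "al t \<in> grid a b" "be t \<in> grid a b" using assms a1 b1 k1 kn by (auto simp: al_def be_def L_def R_def)
  moreover then have "f (al t) > 0" "f (be t) > 0" using pos by auto
  ultimately show ?thesis by (auto simp: S_def Ri_def A_def B_def field_simps)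
qed

lemma prod_AB: "(\<Prod>x\<in>grid_file a b k. S' x) = (\<Prod>t\<in>{L..Suc R}. A t * B t)"
  if "\<And>t. t \<in> {L..R} \<Longrightarrow> S' (xx t) = S t * (1 / Ri (Suc t))" for S'
proof -
  have "(\<Prod>x\<in>grid_file a b k. S' x) = (\<Prod>t\<in>{L..R}. S' (xx t))"
    unfolding file_k_img by (rule prod.reindex[OF inj_xx, unfolded comp_def])
  also have "\<dots> = (\<Prod>t\<in>{L..R}. S t * (1 / Ri (Suc t)))" using that by (rule prod.cong[OF refl])
  also have "\<dots> = S L * (\<Prod>t\<in>{Suc L..R}. S t * (1 / Ri t)) * (1 / Ri (Suc R))"
    by (rule telescope[OF LR])
  also have "\<dots> = A L * B L * (\<Prod>t\<in>{Suc L..R}. A t * B t) * (A (Suc R) * B (Suc R))"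
    using first_L last_R mid by simp
  also have "\<dots> = (\<Prod>t\<in>{L..Suc R}. A t * B t)"
  proof -
    have "{L..Suc R} = insert L (insert (Suc R) {Suc L..R})" using LR by auto
    then show ?thesis using LR by (simp add: mult_ac)
  qed
  finally show ?thesis .
qed

lemma prod_A: "(\<Prod>t\<in>{L..Suc R}. A t) = (\<Prod>x\<in>grid_file a b (k+1). f x)"
proof -
  have "(\<Prod>t\<in>{L..Suc R}. A t) = (\<Prod>t\<in>{t\<in>{L..Suc R}. al t \<in> grid a b}. f (al t))"
    unfolding A_def by (rule prod.inter_filter[symmetric]) simp
  also have "\<dots> = (\<Prod>x\<in>al ` {t\<in>{L..Suc R}. al t \<in> grid a b}. f x)"
  proof (rule prod.reindex[symmetric, unfolded comp_def])
    show "inj_on al {t \<in> {L..Suc R}. al t \<in> grid a b}" unfolding inj_on_def al_def L_def max_def by (auto split: if_splits)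
  qed
  also have "al ` {t\<in>{L..Suc R}. al t \<in> grid a b} = grid_file a b (k+1)"
  proof
    show "al ` {t\<in>{L..Suc R}. al t \<in> grid a b} \<subseteq> grid_file a b (k+1)"
      by (auto simp: al_def L_def R_def file_mem)
    show "grid_file a b (k+1) \<subseteq> al ` {t\<in>{L..Suc R}. al t \<in> grid a b}"
    proof
      fix p assume p: "p \<in> grid_file a b (k+1)"
      obtain i j where pij: "p = (i,j)" by (cases p)
      have h: "1 \<le> i" "i \<le> a" "1 \<le> j" "j \<le> b" "int j - int i + int a = int k + 1"
        using p pij by (auto simp: file_mem)
      have "al (i + k + 1) = p" "i + k + 1 \<in> {L..Suc R}" using h pij by (auto simp: al_def L_def R_def)
      then show "p \<in> al ` {t\<in>{L..Suc R}. al t \<in> grid a b}" using p file_sub by force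
    qed
  qed
  finally show ?thesis .
qed

lemma prod_B: "(\<Prod>t\<in>{L..Suc R}. B t) = (\<Prod>x\<in>grid_file a b (k-1). f x)"
proof -
  have "(\<Prod>t\<in>{L..Suc R}. B t) = (\<Prod>t\<in>{t\<in>{L..Suc R}. be t \<in> grid a b}. f (be t))"
    unfolding B_def by (rule prod.inter_filter[symmetric]) simp
  also have "\<dots> = (\<Prod>x\<in>be ` {t\<in>{L..Suc R}. be t \<in> grid a b}. f x)"
  proof (rule prod.reindex[symmetric, unfolded comp_def])
    show "inj_on be {t \<in> {L..Suc R}. be t \<in> grid a b}" unfolding inj_on_def be_def L_def max_def by (auto split: if_splits)
  qed
  also have "be ` {t\<in>{L..Suc R}. be t \<in> grid a b} = grid_file a b (k-1)"
  proof
    show "be ` {t\<in>{L..Suc R}. be t \<in> grid a b} \<subseteq> grid_file a b (k-1)"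
      using k1 by (auto simp: be_def L_def R_def file_mem)
    show "grid_file a b (k-1) \<subseteq> be ` {t\<in>{L..Suc R}. be t \<in> grid a b}"
    proof
      fix p assume p: "p \<in> grid_file a b (k-1)"
      obtain i j where pij: "p = (i,j)" by (cases p)
      have h: "1 \<le> i" "i \<le> a" "1 \<le> j" "j \<le> b" "int j - int i + int a = int k - 1"
        using p pij k1 by (auto simp: file_mem)
      have "be (i + k) = p" "i + k \<in> {L..Suc R}" using h pij by (auto simp: be_def L_def R_def)
      then show "p \<in> be ` {t\<in>{L..Suc R}. be t \<in> grid a b}" using p file_sub by force
    qed
  qed
  finally show ?thesis .
qed

lemma key: "file_prod a b (toggle_file a b k f) k * file_prod a b f k = file_prod a b f (k-1) * file_prod a b f (k+1)"
proof -
  let ?D = "\<lambda>x. (\<Sum>w\<in>down_set (grid a b) x. fhat f w) * par_sum (fhat f) (up_set (grid a b) x)"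
  have "file_prod a b (toggle_file a b k f) k * file_prod a b f k =
      (\<Prod>x\<in>grid_file a b k. TV a b f x) * (\<Prod>x\<in>grid_file a b k. f x)"
    unfolding file_prod_eq toggle_file_eq[OF a1 b1] by simp
  also have "\<dots> = (\<Prod>x\<in>grid_file a b k. TV a b f x * f x)" by (simp add: prod.distrib)
  also have "\<dots> = (\<Prod>x\<in>grid_file a b k. ?D x)"
  proof (rule prod.cong[OF refl])
    fix x assume "x \<in> grid_file a b k"
    then have "f x > 0" using pos file_sub[of a b k] by blast
    then show "TV a b f x * f x = ?D x" by (simp add: TV_def)
  qed
  also have "\<dots> = (\<Prod>t\<in>{L..Suc R}. A t * B t)"
    by (rule prod_AB) (simp add: DU)
  also have "\<dots> = file_prod a b f (k-1) * file_prod a b f (k+1)"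
    unfolding prod.distrib prod_A prod_B file_prod_eq by simp
  finally show ?thesis .
qed

lemma other: "m \<noteq> k \<Longrightarrow> file_prod a b (toggle_file a b k f) m = file_prod a b f m"
  unfolding file_prod_eq toggle_file_eq[OF a1 b1]
  by (rule prod.cong[OF refl]) (auto simp: grid_file_def)

lemma fpos: "file_prod a b f m > 0"
  unfolding file_prod_eq using pos file_sub[of a b m] by (intro prod_pos) blast

end

theorem lemma6:
  fixes a b k :: nat and f :: "nat \<times> nat \<Rightarrow> real"
  assumes "1 \<le> a" and "1 \<le> b"
    and "\<forall>x\<in>grid a b. f x > 0"
    and "1 \<le> k" and "k \<le> a + b - 1"
  shows "quot_seq a b (toggle_file a b k f) = sigma k (quot_seq a b f)"
proof -
  let ?g = "toggle_file a b k f"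
  define p where "p = file_prod a b f"
  define p' where "p' = file_prod a b ?g"
  have kk: "p' k * p k = p (k-1) * p (k+1)" using key[OF assms] by (simp add: p_def p'_def)
  have ot: "m \<noteq> k \<Longrightarrow> p' m = p m" for m using other[OF assms] by (simp add: p_def p'_def)
  have ps: "p m > 0" for m using fpos[OF assms] by (simp add: p_def)
  have pk: "p' k = p (k-1) * p (k+1) / p k" using kk ps[of k] by (simp add: field_simps)
  have p'pos: "p' k > 0" using pk ps[of k] ps[of "k-1"] ps[of "k+1"] by simp
  have q1: "quot_seq a b g ! m = file_prod a b g (Suc m) / file_prod a b g m" if "m < a + b" for g m
    using that by (simp add: quot_seq_def del: upt_Suc)
  have len: "length (quot_seq a b g) = a + b" for g by (simp add: quot_seq_def del: upt_Suc)
  have kl: "k < a + b" "k - 1 < a + b" "k \<ge> 1" using assms by auto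
  show ?thesis
  proof (rule nth_equalityI)
    show "length (quot_seq a b ?g) = length (sigma k (quot_seq a b f))"
      by (simp add: sigma_def len)
    fix m assume "m < length (quot_seq a b ?g)"
    then have m: "m < a + b" by (simp add: len)
    have sg: "sigma k (quot_seq a b f) ! m = (if m = k then quot_seq a b f ! (k-1) else if m = k - 1 then quot_seq a b f ! k else quot_seq a b f ! m)"
      unfolding sigma_def using m kl by (simp add: len nth_list_update)
    show "quot_seq a b ?g ! m = sigma k (quot_seq a b f) ! m"
    proof (cases "m = k")
      case True
      have "Suc (k-1) = k" using kl by simp
      then show ?thesis unfolding sg q1[OF m] q1[OF kl(2)] using True ot[of "Suc k"] p'pos ps[of k] ps[of "k-1"] ps[of "k+1"]
        by (simp add: p_def[symmetric] p'_def[symmetric] field_simps) (simp add: kk[simplified] mult.commute)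
    next
      case False
      show ?thesis
      proof (cases "m = k - 1")
        case True
        have mk: "Suc m = k" using True kl by simp
        then show ?thesis unfolding sg q1[OF m] q1[OF kl(1)] using True False ot[of m] pk ps[of k] ps[of "k-1"] ps[of "k+1"]
          by (simp add: p_def[symmetric] p'_def[symmetric] field_simps)
      next
        case F2: False
        have "Suc m \<noteq> k" using F2 by auto
        then show ?thesis unfolding sg q1[OF m] using False F2 ot[of m] ot[of "Suc m"]
          by (simp add: p_def[symmetric] p'_def[symmetric])
      qed
    qed
  qed
qed

end
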